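(* Let $R\ge1$, $\Gamma\ge1$, $1\le s_1\le n_1$, $1\le s_2\le n_2$. For all $0<\varepsilon<1$, $$\log N(S^{R,\Gamma}_{s_1,s_2},\|\cdot\|_F,\varepsilon)\le R(s_1+s_2+1)\log\!\Big(\frac{18\Gamma R}{\varepsilon}\Big)+Rs_1\log\!\Big(\frac{en_1}{s_1}\Big)+Rs_2\log\!\Big(\frac{en_2}{s_2}\Big).$$
   Context: $N(M,\|\cdot\|,\varepsilon)$ is the minimal number of $\|\cdot\|$-balls of radius $\varepsilon$ needed to cover $M$. $S^{R,\Gamma}_{s_1,s_2}$ is the set of $Z=\sum_{r=1}^R\sigma_ru^r(v^r)^T\in\mathbb{R}^{n_1\times n_2}$ with $u^r\in\mathbb{R}^{n_1}$, $v^r\in\mathbb{R}^{n_2}$, $|\mathrm{supp}(u^r)|\le s_1$, $|\mathrm{supp}(v^r)|\le s_2$, $\|u^r\|_2=\|v^r\|_2=1$ for all $r$, and $\sigma\in\mathbb{R}^R$ with $\|\sigma\|_2\le\Gamma$. *)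

theory Defs
  imports "HOL-Analysis.Analysis"
begin

definition covering_number :: "'a::real_normed_vector set \<Rightarrow> real \<Rightarrow> nat" where
  "covering_number M eps =
     (LEAST k. \<exists>C. finite C \<and> card C = k \<and> M \<subseteq> (\<Union>c\<in>C. cball c eps))"

definition vsupp :: "real ^ 'n \<Rightarrow> 'n set" where
  "vsupp u = {i. u $ i \<noteq> 0}"

text \<open>Outer product u v^T as an n1 x n2 matrix. The norm on real^'n2^'n1 is the Frobenius norm.\<close>
definition outer :: "real ^ 'n1 \<Rightarrow> real ^ 'n2 \<Rightarrow> real ^ 'n2 ^ 'n1" where
  "outer u v = (\<chi> i j. u $ i * v $ j)"

definition sparse_lowrank :: "nat \<Rightarrow> real \<Rightarrow> nat \<Rightarrow> nat \<Rightarrow> (real ^ 'n2 ^ 'n1) set" where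
  "sparse_lowrank R \<Gamma> s1 s2 =
     {Z. \<exists>(\<sigma>::nat \<Rightarrow> real) (u::nat \<Rightarrow> real ^ 'n1) (v::nat \<Rightarrow> real ^ 'n2).
          Z = (\<Sum>r<R. \<sigma> r *\<^sub>R outer (u r) (v r)) \<and>
          (\<forall>r<R. card (vsupp (u r)) \<le> s1 \<and> card (vsupp (v r)) \<le> s2 \<and>
                  norm (u r) = 1 \<and> norm (v r) = 1) \<and>
          sqrt (\<Sum>r<R. (\<sigma> r)\<^sup>2) \<le> \<Gamma>}"

end

theory Submission
  imports Defs "HOL-Library.Multiset"
begin


lemma pow_div_fact_le_exp:
  fixes x :: real assumes "0 \<le> x" shows "x ^ k / fact k \<le> exp x"
proof -
  have s: "(\<lambda>n. x^n / fact n) sums exp x"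
    using exp_converges[of x] by (simp add: divide_inverse scaleR_conv_of_real mult.commute)
  have "(\<Sum>n\<in>{k}. x^n / fact n) \<le> (\<Sum>n. x^n / fact n)"
    by (rule sum_le_suminf) (use s assms in \<open>auto simp: sums_iff\<close>)
  then show ?thesis using s by (simp add: sums_iff)
qed

lemma fact_ge_pow: "(real k / exp 1) ^ k \<le> fact k"
proof -
  have "real k ^ k / fact k \<le> exp (real k)" by (rule pow_div_fact_le_exp) simp
  also have "exp (real k) = exp 1 ^ k" by (simp add: exp_of_nat_mult[symmetric])
  finally have "real k ^ k \<le> exp 1 ^ k * fact k" by (simp add: field_simps)
  then show ?thesis by (simp add: power_divide field_simps)
qed

lemma choose_le_e:
  assumes "k \<ge> 1" shows "real (n choose k) \<le> (exp 1 * real n / real k) ^ k"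
proof (cases "k \<le> n")
  case False then show ?thesis by (simp add: binomial_eq_0)
next
  case True
  have "fact k * (n choose k) = fact n div fact (n - k)"
    using binomial_fact_lemma[OF True]
    by (metis div_mult_self1_is_m fact_gt_zero mult.commute mult.left_commute)
  also have "\<dots> \<le> n ^ k" by (rule fact_div_fact_le_pow[OF True])
  finally have "real (fact k * (n choose k)) \<le> real (n ^ k)" by (simp only: of_nat_le_iff)
  hence a: "fact k * real (n choose k) \<le> real n ^ k" by simp
  have b: "(real k / exp 1) ^ k \<le> fact k" by (rule fact_ge_pow)
  have kp: "(real k / exp 1) ^ k > 0" using assms by simp
  have "(real k / exp 1) ^ k * real (n choose k) \<le> real n ^ k"
    by (rule order_trans[OF mult_right_mono[OF b] a]) simp
  hence "real (n choose k) \<le> real n ^ k / (real k / exp 1) ^ k"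
    using kp by (simp add: field_simps)
  also have "\<dots> = (exp 1 * real n / real k) ^ k" by (simp add: power_divide field_simps)
  finally show ?thesis .
qed




definition gridK :: "nat \<Rightarrow> nat \<Rightarrow> ('n::finite \<Rightarrow> int) set" where
  "gridK s L = {k. card {i. k i \<noteq> 0} \<le> s \<and> (\<Sum>i\<in>UNIV. nat \<bar>k i\<bar>) \<le> L}"

lemma card_FS:
  assumes "finite S"
  shows "card {f. f \<in> S \<rightarrow>\<^sub>E (UNIV::nat set) \<and> (\<Sum>i\<in>S. f i) \<le> L} \<le> (L + card S) choose card S"
    (is "card ?F \<le> _")
proof -
  define \<psi> where "\<psi> f = (\<Sum>i\<in>S. replicate_mset (f i) (Some i)) + replicate_mset (L - (\<Sum>i\<in>S. f i)) None" for f
  have cnt: "count (\<psi> f) (Some i) = f i" if "i \<in> S" for f i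
    using assms that by (simp add: \<psi>_def count_sum count_replicate_mset sum.delta' if_distrib cong: if_cong)
  have inj: "inj_on \<psi> ?F"
  proof (rule inj_onI)
    fix f g assume f: "f \<in> ?F" and g: "g \<in> ?F" and e: "\<psi> f = \<psi> g"
    show "f = g"
    proof (rule PiE_ext)
      show "f \<in> S \<rightarrow>\<^sub>E UNIV" "g \<in> S \<rightarrow>\<^sub>E UNIV" using f g by auto
      fix i assume "i \<in> S" then show "f i = g i" using cnt[of i f] cnt[of i g] e by simp
    qed
  qed
  have sub: "\<psi> ` ?F \<subseteq> multisets_of_size (insert None (Some ` S)) L"
  proof
    fix M assume "M \<in> \<psi> ` ?F"
    then obtain f where f: "f \<in> ?F" and M: "M = \<psi> f" by blast
    have "size M = L" using f by (simp add: M \<psi>_def)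
    moreover have "set_mset M \<subseteq> insert None (Some ` S)"
    proof
      fix x assume x: "x \<in># M"
      show "x \<in> insert None (Some ` S)"
      proof (rule ccontr)
        assume n: "x \<notin> insert None (Some ` S)"
        have "count M x = 0" using n
          by (auto simp: M \<psi>_def count_sum count_replicate_mset intro!: sum.neutral)
        with x show False by (simp add: count_eq_zero_iff)
      qed
    qed
    ultimately show "M \<in> multisets_of_size (insert None (Some ` S)) L"
      by (simp add: multisets_of_size_def)
  qed
  have "card ?F = card (\<psi> ` ?F)" using inj by (simp add: card_image)
  also have "\<dots> \<le> card (multisets_of_size (insert None (Some ` S)) L)"
    by (rule card_mono[OF _ sub]) (use assms in \<open>simp add: finite_multisets_of_size\<close>)
  also have "\<dots> = (card S + 1 + L - 1) choose L"
    using assms by (simp add: card_multisets_of_size card_image)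
  also have "\<dots> = (L + card S) choose card S"
    using binomial_symmetric[of L "L + card S"] by (simp add: add.commute)
  finally show ?thesis .
qed

lemma card_KS:
  fixes S :: "'n::finite set"
  shows "finite {k::'n \<Rightarrow> int. (\<forall>i. i \<notin> S \<longrightarrow> k i = 0) \<and> (\<Sum>i\<in>S. nat \<bar>k i\<bar>) \<le> L} \<and>
    card {k::'n \<Rightarrow> int. (\<forall>i. i \<notin> S \<longrightarrow> k i = 0) \<and> (\<Sum>i\<in>S. nat \<bar>k i\<bar>) \<le> L}
    \<le> 2 ^ card S * ((L + card S) choose card S)" (is "finite ?K \<and> card ?K \<le> _")
proof -
  define F where "F = {f. f \<in> S \<rightarrow>\<^sub>E (UNIV::nat set) \<and> (\<Sum>i\<in>S. f i) \<le> L}"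
  define \<phi> where "\<phi> k = (restrict (\<lambda>i. 0 \<le> k i) S, restrict (\<lambda>i. nat \<bar>k i\<bar>) S)" for k :: "'n \<Rightarrow> int"
  have inj: "inj_on \<phi> ?K"
  proof (rule inj_onI)
    fix k k' assume k: "k \<in> ?K" and k': "k' \<in> ?K" and e: "\<phi> k = \<phi> k'"
    show "k = k'"
    proof
      fix i show "k i = k' i"
      proof (cases "i \<in> S")
        case True
        have "(0 \<le> k i) = (0 \<le> k' i)" "nat \<bar>k i\<bar> = nat \<bar>k' i\<bar>"
          using e True by (auto simp: \<phi>_def restrict_def fun_eq_iff split: if_splits dest: spec[of _ i])
        then have "\<bar>k i\<bar> = \<bar>k' i\<bar>" "(0 \<le> k i) = (0 \<le> k' i)" by simp_all
        then show ?thesis by arith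
      next
        case False then show ?thesis using k k' by auto
      qed
    qed
  qed
  have finF: "finite F"
  proof (rule finite_subset)
    show "F \<subseteq> S \<rightarrow>\<^sub>E {..L}"
    proof
      fix f assume f: "f \<in> F"
      have "f i \<le> L" if "i \<in> S" for i
      proof -
        have "f i \<le> (\<Sum>i\<in>S. f i)" using that by (intro member_le_sum) auto
        then show ?thesis using f by (auto simp: F_def)
      qed
      then show "f \<in> S \<rightarrow>\<^sub>E {..L}" using f by (auto simp: F_def)
    qed
  qed (auto intro: finite_PiE)
  have sub: "\<phi> ` ?K \<subseteq> (S \<rightarrow>\<^sub>E (UNIV::bool set)) \<times> F"
    by (auto simp: \<phi>_def F_def)
  have finT: "finite ((S \<rightarrow>\<^sub>E (UNIV::bool set)) \<times> F)" using finF by (auto intro: finite_PiE)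
  have finK: "finite ?K"
    using finite_imageD[OF finite_subset[OF sub finT] inj] .
  have "card ?K = card (\<phi> ` ?K)" using inj by (simp add: card_image)
  also have "\<dots> \<le> card ((S \<rightarrow>\<^sub>E (UNIV::bool set)) \<times> F)"
    by (rule card_mono[OF _ sub]) (use finF in \<open>auto intro: finite_PiE\<close>)
  also have "\<dots> = 2 ^ card S * card F"
    by (simp add: card_cartesian_product card_PiE)
  also have "\<dots> \<le> 2 ^ card S * ((L + card S) choose card S)"
    unfolding F_def by (rule mult_left_mono[OF card_FS]) auto
  finally show ?thesis using finK by simp
qed

lemma card_gridK:
  assumes "s \<le> CARD('n::finite)"
  shows "finite (gridK s L :: ('n \<Rightarrow> int) set) \<and> card (gridK s L :: ('n \<Rightarrow> int) set) \<le> (CARD('n) choose s) * (2 ^ s * ((L + s) choose s))"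
proof -
  define KS where "KS S = {k::'n \<Rightarrow> int. (\<forall>i. i \<notin> S \<longrightarrow> k i = 0) \<and> (\<Sum>i\<in>S. nat \<bar>k i\<bar>) \<le> L}" for S
  define Ss where "Ss = {S. S \<subseteq> (UNIV::'n set) \<and> card S = s}"
  have sub: "gridK s L \<subseteq> (\<Union>S\<in>Ss. KS S)"
  proof
    fix k :: "'n \<Rightarrow> int" assume k: "k \<in> gridK s L"
    define A where "A = {i. k i \<noteq> 0}"
    have cA: "card A \<le> s" using k by (simp add: gridK_def A_def)
    have "s - card A \<le> card (UNIV - A)"
      using assms by (simp add: card_Diff_subset)
    then obtain T where T: "T \<subseteq> UNIV - A" "card T = s - card A" "finite T"
      by (rule obtain_subset_with_card_n)
    have "card (A \<union> T) = s" using T cA by (subst card_Un_disjoint) auto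
    hence SS: "A \<union> T \<in> Ss" by (simp add: Ss_def)
    have "(\<Sum>i\<in>A \<union> T. nat \<bar>k i\<bar>) = (\<Sum>i\<in>UNIV. nat \<bar>k i\<bar>)"
      by (rule sum.mono_neutral_left) (auto simp: A_def)
    hence "k \<in> KS (A \<union> T)" using k by (auto simp: KS_def gridK_def A_def)
    with SS show "k \<in> (\<Union>S\<in>Ss. KS S)" by blast
  qed
  have finU: "finite (\<Union>S\<in>Ss. KS S)"
    proof (rule finite_UN_I)
      show "finite Ss" by (simp add: Ss_def)
      fix S assume "S \<in> Ss"
      show "finite (KS S)" using card_KS[of S L] by (simp add: KS_def)
    qed
  have "card (gridK s L :: ('n \<Rightarrow> int) set) \<le> card (\<Union>S\<in>Ss. KS S)"
    by (rule card_mono[OF finU sub])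
  also have "\<dots> \<le> (\<Sum>S\<in>Ss. card (KS S))" by (rule card_UN_le) (simp add: Ss_def)
  also have "\<dots> \<le> (\<Sum>S\<in>Ss. 2 ^ s * ((L + s) choose s))"
  proof (rule sum_mono)
    fix S assume "S \<in> Ss"
    then show "card (KS S) \<le> 2 ^ s * ((L + s) choose s)"
      using card_KS[of S L] by (simp add: KS_def Ss_def)
  qed
  also have "\<dots> = (CARD('n) choose s) * (2 ^ s * ((L + s) choose s))"
    using n_subsets[of "UNIV::'n set" s] by (simp add: Ss_def)
  finally show ?thesis using finite_subset[OF sub finU] by simp
qed




definition tr :: "real \<Rightarrow> int" where
  "tr x = (if 0 \<le> x then \<lfloor>x\<rfloor> else - \<lfloor>-x\<rfloor>)"

lemma tr_abs_le: "\<bar>real_of_int (tr x)\<bar> \<le> \<bar>x\<bar>"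
  by (auto simp: tr_def)

lemma tr_err: "\<bar>x - real_of_int (tr x)\<bar> < 1"
  by (auto simp: tr_def) (smt (verit) real_of_int_floor_add_one_gt of_int_floor_le)+

lemma tr_zero [simp]: "tr 0 = 0" by (simp add: tr_def)

lemma tr_scaled:
  assumes "\<delta> > 0"
  shows "\<bar>\<delta> * real_of_int (tr (x / \<delta>))\<bar> \<le> \<bar>x\<bar>"
    and "\<bar>x - \<delta> * real_of_int (tr (x / \<delta>))\<bar> < \<delta>"
proof -
  have "\<bar>real_of_int (tr (x / \<delta>))\<bar> \<le> \<bar>x\<bar> / \<delta>" using tr_abs_le[of "x/\<delta>"] assms by simp
  then show "\<bar>\<delta> * real_of_int (tr (x / \<delta>))\<bar> \<le> \<bar>x\<bar>" using assms
    by (simp add: abs_mult field_simps)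
  have "\<bar>x / \<delta> - real_of_int (tr (x / \<delta>))\<bar> < 1" by (rule tr_err)
  hence "\<delta> * \<bar>x / \<delta> - real_of_int (tr (x / \<delta>))\<bar> < \<delta>" using assms by simp
  also have "\<delta> * \<bar>x / \<delta> - real_of_int (tr (x / \<delta>))\<bar> = \<bar>x - \<delta> * real_of_int (tr (x / \<delta>))\<bar>"
  proof -
    have "x - \<delta> * real_of_int (tr (x / \<delta>)) = \<delta> * (x / \<delta> - real_of_int (tr (x / \<delta>)))"
      using assms by (simp add: field_simps)
    then show ?thesis using assms by (simp add: abs_mult)
  qed
  finally show "\<bar>x - \<delta> * real_of_int (tr (x / \<delta>))\<bar> < \<delta>" .
qed

lemma norm_vec_real: "norm (x :: real^'n) = sqrt (\<Sum>i\<in>UNIV. (x$i)\<^sup>2)"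
  by (simp add: norm_vec_def L2_set_def)

lemma sum_abs_le_sqrt_card:
  fixes u :: "real^'n"
  shows "(\<Sum>i\<in>UNIV. \<bar>u$i\<bar>) \<le> sqrt (real (card (vsupp u))) * norm u"
proof -
  define g where "g i = (if i \<in> vsupp u then 1 else (0::real))" for i
  have "(\<Sum>i\<in>UNIV. \<bar>u$i\<bar>) = (\<Sum>i\<in>UNIV. \<bar>u$i\<bar> * \<bar>g i\<bar>)"
    by (rule sum.cong) (auto simp: g_def vsupp_def)
  also have "\<dots> \<le> L2_set (\<lambda>i. u$i) UNIV * L2_set g UNIV" by (rule L2_set_mult_ineq)
  also have "L2_set g UNIV = sqrt (real (card (vsupp u)))"
  proof -
    have "(\<Sum>i\<in>UNIV. (g i)\<^sup>2) = (\<Sum>i\<in>vsupp u. 1)"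
      by (subst sum.mono_neutral_right[of UNIV "vsupp u"]) (auto simp: g_def)
    then show ?thesis by (simp add: L2_set_def)
  qed
  also have "L2_set (\<lambda>i. u$i) UNIV = norm u" by (simp add: norm_vec_real L2_set_def)
  finally show ?thesis by (simp add: mult.commute)
qed

definition gridv :: "nat \<Rightarrow> real \<Rightarrow> nat \<Rightarrow> (real^'n::finite) set" where
  "gridv s \<delta> L = (\<lambda>k. \<chi> i. \<delta> * real_of_int (k i)) ` gridK s L"

lemma approx_vec:
  fixes u :: "real^'n::finite"
  assumes nu: "norm u = 1" and su: "card (vsupp u) \<le> s" and s1: "s \<ge> 1" and eta: "\<eta> > 0"
  shows "\<exists>w\<in>gridv s (\<eta> / sqrt s) (nat \<lfloor>s / \<eta>\<rfloor>). norm (u - w) \<le> \<eta> \<and> norm w \<le> 1"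
proof -
  define \<delta> where "\<delta> = \<eta> / sqrt s"
  have dp: "\<delta> > 0" using eta s1 by (simp add: \<delta>_def)
  define k where "k i = tr (u$i / \<delta>)" for i
  define w :: "real^'n" where "w = (\<chi> i. \<delta> * real_of_int (k i))"
  have kz: "{i. k i \<noteq> 0} \<subseteq> vsupp u" by (auto simp: k_def vsupp_def)
  have c1: "card {i. k i \<noteq> 0} \<le> s"
    using card_mono[OF _ kz] su by simp
  have "real (\<Sum>i\<in>UNIV. nat \<bar>k i\<bar>) = (\<Sum>i\<in>UNIV. \<bar>real_of_int (k i)\<bar>)"
    by simp
  also have "\<dots> \<le> (\<Sum>i\<in>UNIV. \<bar>u$i\<bar> / \<delta>)"
  proof (rule sum_mono)
    fix i
    show "\<bar>real_of_int (k i)\<bar> \<le> \<bar>u$i\<bar> / \<delta>"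
      using tr_abs_le[of "u$i / \<delta>"] dp by (simp add: k_def)
  qed
  also have "\<dots> = (\<Sum>i\<in>UNIV. \<bar>u$i\<bar>) / \<delta>" by (simp add: sum_divide_distrib)
  also have "\<dots> \<le> sqrt (real (card (vsupp u))) * norm u / \<delta>"
    by (rule divide_right_mono[OF sum_abs_le_sqrt_card]) (use dp in simp)
  also have "\<dots> \<le> sqrt s / \<delta>" using su dp nu by (simp add: divide_right_mono)
  also have "\<dots> = s / \<eta>" using s1 eta by (simp add: \<delta>_def field_simps)
  finally have c2: "(\<Sum>i\<in>UNIV. nat \<bar>k i\<bar>) \<le> nat \<lfloor>s / \<eta>\<rfloor>"
    by (simp add: le_nat_floor)
  have wg: "w \<in> gridv s \<delta> (nat \<lfloor>s / \<eta>\<rfloor>)"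
    unfolding gridv_def gridK_def w_def using c1 c2 by blast
  have nw: "norm w \<le> 1"
    unfolding nu[symmetric] w_def
    by (rule norm_le_componentwise_cart) (use tr_scaled(1)[OF dp] in \<open>simp add: k_def\<close>)
  have "(\<Sum>i\<in>UNIV. ((u - w)$i)\<^sup>2) = (\<Sum>i\<in>vsupp u. ((u - w)$i)\<^sup>2)"
    by (rule sum.mono_neutral_right) (auto simp: vsupp_def w_def k_def)
  also have "\<dots> \<le> (\<Sum>i\<in>vsupp u. \<delta>\<^sup>2)"
  proof (rule sum_mono)
    fix i
    have "\<bar>(u - w)$i\<bar> \<le> \<delta>" using tr_scaled(2)[OF dp, of "u$i"] by (simp add: w_def k_def)
    then show "((u - w)$i)\<^sup>2 \<le> \<delta>\<^sup>2" using dp by (metis abs_ge_zero power2_abs power_mono)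
  qed
  also have "\<dots> = card (vsupp u) * \<delta>\<^sup>2" by simp
  also have "\<dots> \<le> s * \<delta>\<^sup>2" using su by (simp add: mult_right_mono)
  also have "\<dots> = \<eta>\<^sup>2" using s1 by (simp add: \<delta>_def power_divide)
  finally have "sqrt (\<Sum>i\<in>UNIV. ((u - w)$i)\<^sup>2) \<le> sqrt (\<eta>\<^sup>2)" by (rule real_sqrt_le_mono)
  hence "norm (u - w) \<le> \<eta>" using eta by (simp add: norm_vec_real)
  with wg nw show ?thesis unfolding \<delta>_def by blast
qed




lemma card_gridv:
  assumes s1: "s \<ge> 1" and sn: "s \<le> CARD('n::finite)" and eta: "\<eta> > 0"
  shows "finite (gridv s \<delta> (nat \<lfloor>s / \<eta>\<rfloor>) :: (real^'n) set) \<and>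
    real (card (gridv s \<delta> (nat \<lfloor>s / \<eta>\<rfloor>) :: (real^'n) set))
     \<le> (exp 1 * real CARD('n) / real s) ^ s * (2 * exp 1 * (1 + 1 / \<eta>)) ^ s"
proof -
  define L where "L = nat \<lfloor>s / \<eta>\<rfloor>"
  have G: "finite (gridK s L :: ('n \<Rightarrow> int) set)"
     "card (gridK s L :: ('n \<Rightarrow> int) set) \<le> (CARD('n) choose s) * (2 ^ s * ((L + s) choose s))"
    using card_gridK[OF sn, of L] by auto
  have fin: "finite (gridv s \<delta> L :: (real^'n) set)" using G(1) by (simp add: gridv_def)
  have "card (gridv s \<delta> L :: (real^'n) set) \<le> card (gridK s L :: ('n \<Rightarrow> int) set)"
    unfolding gridv_def by (rule card_image_le[OF G(1)])
  also note G(2)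
  finally have "real (card (gridv s \<delta> L :: (real^'n) set)) \<le> real ((CARD('n) choose s) * (2 ^ s * ((L + s) choose s)))"
    by (simp only: of_nat_le_iff)
  also have "\<dots> = real (CARD('n) choose s) * (2 ^ s * real ((L + s) choose s))" by simp
  also have "\<dots> \<le> (exp 1 * real CARD('n) / real s) ^ s * (2 ^ s * (exp 1 * real (L + s) / real s) ^ s)"
    by (intro mult_mono choose_le_e s1 mult_left_mono) auto
  also have "(exp 1 * real CARD('n) / real s) ^ s * (2 ^ s * (exp 1 * real (L + s) / real s) ^ s)
      \<le> (exp 1 * real CARD('n) / real s) ^ s * (2 * exp 1 * (1 + 1 / \<eta>)) ^ s"
  proof (rule mult_left_mono)
    have e: "2 ^ s * (exp 1 * real (L + s) / real s) ^ s = (2 * exp 1 * (real L / s + 1)) ^ s"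
      using s1 by (simp add: power_mult_distrib[symmetric] field_simps)
    have "(2 * exp 1 * (real L / s + 1)) ^ s \<le> (2 * exp 1 * (1 + 1 / \<eta>)) ^ s"
    proof (rule power_mono)
      have f0: "0 \<le> \<lfloor>s / \<eta>\<rfloor>" using eta by simp
      have "real L = of_int \<lfloor>s / \<eta>\<rfloor>" unfolding L_def using f0 by simp
      hence "real L \<le> s / \<eta>" by simp
      hence "real L / s \<le> 1 / \<eta>" using s1 by (simp add: divide_le_eq field_simps)
      then show "2 * exp 1 * (real L / s + 1) \<le> 2 * exp 1 * (1 + 1 / \<eta>)" by simp
    qed simp
    with e show "2 ^ s * (exp 1 * real (L + s) / real s) ^ s \<le> (2 * exp 1 * (1 + 1 / \<eta>)) ^ s" by simp
  qed simp
  finally show ?thesis using fin unfolding L_def by simp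
qed



lemma outer_diff_left: "outer (u - u') v = outer u v - outer u' v"
  by (simp add: outer_def vec_eq_iff algebra_simps)
lemma outer_diff_right: "outer u (v - v') = outer u v - outer u v'"
  by (simp add: outer_def vec_eq_iff algebra_simps)

lemma norm_outer: "norm (outer (u::real^'n1::finite) (v::real^'n2::finite)) = norm u * norm v"
proof -
  have r: "outer u v $ i = (u$i) *\<^sub>R v" for i by (simp add: outer_def vec_eq_iff)
  have "norm (outer u v) = L2_set (\<lambda>i. norm (outer u v $ i)) UNIV" by (rule norm_vec_def)
  also have "\<dots> = L2_set (\<lambda>i. \<bar>u$i\<bar> * norm v) UNIV" by (simp only: r norm_scaleR)
  also have "\<dots> = L2_set (\<lambda>i. \<bar>u$i\<bar>) UNIV * norm v"
    by (rule L2_set_left_distrib[symmetric]) simp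
  also have "L2_set (\<lambda>i. \<bar>u$i\<bar>) UNIV = norm u" by (simp only: norm_vec_def real_norm_def)
  finally show ?thesis .
qed

lemma term_bound:
  fixes p p' :: "real^'n1::finite" and q q' :: "real^'n2::finite"
  assumes "norm p = 1" "norm q = 1" "norm p' \<le> 1" "norm (p - p') \<le> \<eta>" "norm (q - q') \<le> \<eta>"
    "\<bar>a - a'\<bar> \<le> d" "\<bar>a'\<bar> \<le> \<Gamma>"
  shows "norm (a *\<^sub>R outer p q - a' *\<^sub>R outer p' q') \<le> d + 2 * \<Gamma> * \<eta>"
proof -
  have id: "a *\<^sub>R outer p q - a' *\<^sub>R outer p' q' =
     (a - a') *\<^sub>R outer p q + a' *\<^sub>R outer (p - p') q + a' *\<^sub>R outer p' (q - q')"
    by (simp add: outer_def vec_eq_iff algebra_simps)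
  have G: "0 \<le> \<Gamma>" using assms(7) by linarith
  have eta: "0 \<le> \<eta>" using assms(4) norm_ge_zero order_trans by blast
  have "norm (a *\<^sub>R outer p q - a' *\<^sub>R outer p' q') \<le>
     norm ((a - a') *\<^sub>R outer p q) + norm (a' *\<^sub>R outer (p - p') q) + norm (a' *\<^sub>R outer p' (q - q'))"
    unfolding id by (meson norm_triangle_ineq order_trans add_right_mono)
  also have "\<dots> = \<bar>a - a'\<bar> + \<bar>a'\<bar> * norm (p - p') + \<bar>a'\<bar> * (norm p' * norm (q - q'))"
    using assms by (simp add: norm_outer)
  also have "\<dots> \<le> d + \<Gamma> * \<eta> + \<Gamma> * (1 * \<eta>)"
    using assms G eta by (intro add_mono mult_mono) auto
  finally show ?thesis by simp
qed

lemma sigma_le: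
  fixes \<sigma> :: "nat \<Rightarrow> real"
  assumes "sqrt (\<Sum>r<R. (\<sigma> r)\<^sup>2) \<le> \<Gamma>" "r < R"
  shows "\<bar>\<sigma> r\<bar> \<le> \<Gamma>"
proof -
  have "(\<sigma> r)\<^sup>2 \<le> (\<Sum>r<R. (\<sigma> r)\<^sup>2)" using assms(2) by (intro member_le_sum) auto
  hence "sqrt ((\<sigma> r)\<^sup>2) \<le> sqrt (\<Sum>r<R. (\<sigma> r)\<^sup>2)" by (rule real_sqrt_le_mono)
  with assms(1) show ?thesis by simp
qed


theorem mainTheorem9:
  fixes R s1 s2 :: nat and \<Gamma> \<epsilon> :: real
  assumes "R \<ge> 1" and "\<Gamma> \<ge> 1"
    and "1 \<le> s1" and "s1 \<le> CARD('n1::finite)"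
    and "1 \<le> s2" and "s2 \<le> CARD('n2::finite)"
    and "0 < \<epsilon>" and "\<epsilon> < 1"
  shows "ln (real (covering_number
            (sparse_lowrank R \<Gamma> s1 s2 :: (real ^ 'n2 ^ 'n1) set) \<epsilon>))
         \<le> real R * real (s1 + s2 + 1) * ln (18 * \<Gamma> * real R / \<epsilon>)
           + real R * real s1 * ln (exp 1 * real CARD('n1) / real s1)
           + real R * real s2 * ln (exp 1 * real CARD('n2) / real s2)"
proof -
  note R1 = assms(1) and G1 = assms(2) and s11 = assms(3) and s1n = assms(4)
    and s21 = assms(5) and s2n = assms(6) and ep = assms(7) and ep1 = assms(8)
  define x where "x = \<Gamma> * real R / \<epsilon>"
  have Rp: "real R \<ge> 1" using R1 by simp
  have x1: "x \<ge> 1"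
  proof -
    have "\<Gamma> * real R \<ge> 1" using mult_mono[OF G1 Rp] G1 by simp
    moreover have "\<Gamma> * real R / \<epsilon> \<ge> \<Gamma> * real R" using ep ep1 calculation
      using mult_left_le[of \<epsilon> "\<Gamma> * real R"] by (simp add: le_divide_eq)
    ultimately show ?thesis unfolding x_def by linarith
  qed
  define d where "d = (3/25) * \<epsilon> / real R"
  define \<eta> where "\<eta> = (11/25) * \<epsilon> / (real R * \<Gamma>)"
  have dp: "d > 0" using ep Rp by (simp add: d_def)
  have etap: "\<eta> > 0" using ep Rp G1 by (simp add: \<eta>_def)
  define J where "J = nat \<lfloor>\<Gamma> / d\<rfloor>"
  define Gs where "Gs = (\<lambda>j::int. d * of_int j) ` {- int J..int J}"
  define Gu where "Gu = (gridv s1 (\<eta> / sqrt s1) (nat \<lfloor>s1 / \<eta>\<rfloor>) :: (real^'n1) set)"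
  define Gv where "Gv = (gridv s2 (\<eta> / sqrt s2) (nat \<lfloor>s2 / \<eta>\<rfloor>) :: (real^'n2) set)"
  define f where "f = (\<lambda>(\<sigma>, u, v). (\<Sum>r<R. \<sigma> r *\<^sub>R outer (u r) (v r)) :: real^'n2^'n1)"
  define Dom where "Dom = (PiE {..<R} (\<lambda>_. Gs)) \<times> (PiE {..<R} (\<lambda>_. Gu)) \<times> (PiE {..<R} (\<lambda>_. Gv))"
  define CC where "CC = f ` Dom"
  have cu: "finite Gu \<and> real (card Gu) \<le> (exp 1 * real CARD('n1) / real s1) ^ s1 * (2 * exp 1 * (1 + 1 / \<eta>)) ^ s1"
    unfolding Gu_def by (rule card_gridv[OF s11 s1n etap])
  have cv: "finite Gv \<and> real (card Gv) \<le> (exp 1 * real CARD('n2) / real s2) ^ s2 * (2 * exp 1 * (1 + 1 / \<eta>)) ^ s2"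
    unfolding Gv_def by (rule card_gridv[OF s21 s2n etap])
  have finGs: "finite Gs" by (simp add: Gs_def)
  have finDom: "finite Dom" unfolding Dom_def using cu cv finGs by (auto intro!: finite_PiE)
  have finCC: "finite CC" unfolding CC_def using finDom by simp
  have cover: "(sparse_lowrank R \<Gamma> s1 s2 :: (real ^ 'n2 ^ 'n1) set) \<subseteq> (\<Union>c\<in>CC. cball c \<epsilon>)"
  proof
    fix Z assume "Z \<in> (sparse_lowrank R \<Gamma> s1 s2 :: (real ^ 'n2 ^ 'n1) set)"
    then obtain \<sigma> u v where Z: "Z = (\<Sum>r<R. \<sigma> r *\<^sub>R outer (u r) (v r))"
      and uv: "\<forall>r<R. card (vsupp (u r)) \<le> s1 \<and> card (vsupp (v r)) \<le> s2 \<and> norm (u r) = 1 \<and> norm (v r) = 1"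
      and sg: "sqrt (\<Sum>r<R. (\<sigma> r)\<^sup>2) \<le> \<Gamma>"
      unfolding sparse_lowrank_def by blast
    have "\<forall>r\<in>{..<R}. \<exists>w\<in>Gu. norm (u r - w) \<le> \<eta> \<and> norm w \<le> 1"
      using uv approx_vec[OF _ _ s11 etap] unfolding Gu_def by auto
    then obtain uu where uu: "\<forall>r\<in>{..<R}. uu r \<in> Gu \<and> norm (u r - uu r) \<le> \<eta> \<and> norm (uu r) \<le> 1"
      by metis
    have "\<forall>r\<in>{..<R}. \<exists>w\<in>Gv. norm (v r - w) \<le> \<eta> \<and> norm w \<le> 1"
      using uv approx_vec[OF _ _ s21 etap] unfolding Gv_def by auto
    then obtain vv where vv: "\<forall>r\<in>{..<R}. vv r \<in> Gv \<and> norm (v r - vv r) \<le> \<eta> \<and> norm (vv r) \<le> 1"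
      by metis
    define ss where "ss r = d * of_int (tr (\<sigma> r / d))" for r
    have ssG: "ss r \<in> Gs" if "r < R" for r
    proof -
      have a: "\<bar>\<sigma> r\<bar> \<le> \<Gamma>" by (rule sigma_le[OF sg that])
      have "\<bar>real_of_int (tr (\<sigma> r / d))\<bar> \<le> \<bar>\<sigma> r\<bar> / d" using tr_abs_le[of "\<sigma> r / d"] dp by simp
      also have "\<dots> \<le> \<Gamma> / d" using a dp by (simp add: divide_right_mono)
      finally have "\<bar>tr (\<sigma> r / d)\<bar> \<le> \<lfloor>\<Gamma> / d\<rfloor>" by (simp add: le_floor_iff)
      moreover have "0 \<le> \<lfloor>\<Gamma> / d\<rfloor>" using G1 dp by simp
      ultimately have "tr (\<sigma> r / d) \<in> {- int J..int J}" unfolding J_def by auto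
      then show ?thesis unfolding Gs_def ss_def by blast
    qed
    have dom: "(restrict ss {..<R}, restrict uu {..<R}, restrict vv {..<R}) \<in> Dom"
      unfolding Dom_def using ssG uu vv by auto
    define c where "c = f (restrict ss {..<R}, restrict uu {..<R}, restrict vv {..<R})"
    have c: "c = (\<Sum>r<R. ss r *\<^sub>R outer (uu r) (vv r))"
      unfolding c_def f_def by (auto intro: sum.cong)
    have "norm (Z - c) = norm (\<Sum>r<R. (\<sigma> r *\<^sub>R outer (u r) (v r) - ss r *\<^sub>R outer (uu r) (vv r)))"
      by (simp add: Z c sum_subtractf)
    also have "\<dots> \<le> (\<Sum>r<R. norm (\<sigma> r *\<^sub>R outer (u r) (v r) - ss r *\<^sub>R outer (uu r) (vv r)))"
      by (rule norm_sum)
    also have "\<dots> \<le> (\<Sum>r<R. d + 2 * \<Gamma> * \<eta>)"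
    proof (rule sum_mono)
      fix r assume "r \<in> {..<R}"
      hence r: "r < R" by simp
      have a: "\<bar>\<sigma> r\<bar> \<le> \<Gamma>" by (rule sigma_le[OF sg r])
      show "norm (\<sigma> r *\<^sub>R outer (u r) (v r) - ss r *\<^sub>R outer (uu r) (vv r)) \<le> d + 2 * \<Gamma> * \<eta>"
      proof (rule term_bound)
        show "norm (u r) = 1" "norm (v r) = 1" using uv r by auto
        show "norm (uu r) \<le> 1" "norm (u r - uu r) \<le> \<eta>" "norm (v r - vv r) \<le> \<eta>" using uu vv r by auto
        show "\<bar>\<sigma> r - ss r\<bar> \<le> d" unfolding ss_def using tr_scaled(2)[OF dp, of "\<sigma> r"] by simp
        show "\<bar>ss r\<bar> \<le> \<Gamma>" unfolding ss_def using tr_scaled(1)[OF dp, of "\<sigma> r"] a by simp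
      qed
    qed
    also have "\<dots> = \<epsilon>"
      using Rp G1 by (simp add: d_def \<eta>_def field_simps)
    finally have "dist c Z \<le> \<epsilon>" by (simp add: dist_norm norm_minus_commute)
    moreover have "c \<in> CC" unfolding CC_def c_def using dom by blast
    ultimately show "Z \<in> (\<Union>c\<in>CC. cball c \<epsilon>)" by auto
  qed
  have covle: "covering_number (sparse_lowrank R \<Gamma> s1 s2 :: (real ^ 'n2 ^ 'n1) set) \<epsilon> \<le> card CC"
    unfolding covering_number_def by (rule Least_le) (use finCC cover in blast)
  have e272: "exp 1 < (272/100::real)" by (rule e_less_272)
  have Gd: "\<Gamma> / d = 25 * x / 3" using ep Rp by (simp add: d_def x_def field_simps)
  have ie: "1 / \<eta> = 25 * x / 11" using ep Rp G1 by (simp add: \<eta>_def x_def field_simps)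
  have cGs: "real (card Gs) \<le> 18 * x"
  proof -
    have "card Gs \<le> card {- int J..int J}" unfolding Gs_def by (rule card_image_le) simp
    also have "\<dots> = 2 * J + 1" by simp
    finally have a: "real (card Gs) \<le> 2 * real J + 1" by linarith
    have f0: "0 \<le> \<lfloor>\<Gamma> / d\<rfloor>" using G1 dp by simp
    have "real J = of_int \<lfloor>\<Gamma> / d\<rfloor>" unfolding J_def using f0 by simp
    hence "real J \<le> 25 * x / 3" using Gd of_int_floor_le[of "\<Gamma> / d"] by linarith
    with a x1 show ?thesis by linarith
  qed
  have key: "2 * exp 1 * (1 + 1 / \<eta>) \<le> 18 * x"
  proof -
    have "exp 1 \<le> exp 1 * x" using x1 by simp
    moreover have "exp 1 * x \<le> (272/100) * x" using e272 x1 by (intro mult_right_mono) auto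
    moreover have "2 * exp 1 * (1 + 25 * x / 11) = 2 * exp 1 + (50/11) * (exp 1 * x)" by (simp add: field_simps)
    moreover have gen: "\<And>a b. a \<le> b \<Longrightarrow> b \<le> 272/100*x \<Longrightarrow> 2*a + 50/11*b \<le> 18*x" using x1 by linarith
    ultimately show ?thesis unfolding ie by metis
  qed
  define A1 where "A1 = exp 1 * real CARD('n1) / real s1"
  define A2 where "A2 = exp 1 * real CARD('n2) / real s2"
  have A1p: "A1 \<ge> 1"
  proof -
    have "real CARD('n1) / real s1 \<ge> 1" using s11 s1n by simp
    moreover have "exp 1 \<ge> (1::real)" by simp
    ultimately show ?thesis unfolding A1_def using mult_mono[of 1 "exp 1" 1 "real CARD('n1) / real s1"] by simp
  qed
  have A2p: "A2 \<ge> 1"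
  proof -
    have "real CARD('n2) / real s2 \<ge> 1" using s21 s2n by simp
    moreover have "exp 1 \<ge> (1::real)" by simp
    ultimately show ?thesis unfolding A2_def using mult_mono[of 1 "exp 1" 1 "real CARD('n2) / real s2"] by simp
  qed
  have k0: "2 * exp 1 * (1 + 1 / \<eta>) \<ge> 0" using etap by simp
  have cGu: "real (card Gu) \<le> A1 ^ s1 * (18 * x) ^ s1"
    using cu power_mono[OF key k0, of s1] A1p unfolding A1_def
    by (meson mult_left_mono order_trans zero_le_power order.trans zero_le_one)
  have cGv: "real (card Gv) \<le> A2 ^ s2 * (18 * x) ^ s2"
    using cv power_mono[OF key k0, of s2] A2p unfolding A2_def
    by (meson mult_left_mono order_trans zero_le_power order.trans zero_le_one)
  have "card CC \<le> card Dom" unfolding CC_def by (rule card_image_le[OF finDom])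
  also have "card Dom = card Gs ^ R * card Gu ^ R * card Gv ^ R"
    unfolding Dom_def by (simp add: card_cartesian_product card_PiE)
  finally have "real (card CC) \<le> real (card Gs) ^ R * real (card Gu) ^ R * real (card Gv) ^ R"
    by (metis of_nat_le_iff of_nat_mult of_nat_power)
  also have "\<dots> \<le> (18 * x) ^ R * (A1 ^ s1 * (18 * x) ^ s1) ^ R * (A2 ^ s2 * (18 * x) ^ s2) ^ R"
    using x1 A1p A2p by (intro mult_mono power_mono cGs cGu cGv) auto
  finally have cB: "real (card CC) \<le> (18 * x) ^ R * (A1 ^ s1 * (18 * x) ^ s1) ^ R * (A2 ^ s2 * (18 * x) ^ s2) ^ R" .
  have xp: "18 * x > 0" using x1 by simp
  have A1q: "A1 > 0" and A2q: "A2 > 0" using A1p A2p by auto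
  have lnB: "ln ((18 * x) ^ R * (A1 ^ s1 * (18 * x) ^ s1) ^ R * (A2 ^ s2 * (18 * x) ^ s2) ^ R)
     = real R * real (s1 + s2 + 1) * ln (18 * x) + real R * real s1 * ln A1 + real R * real s2 * ln A2"
    using xp A1q A2q by (simp add: ln_mult ln_realpow algebra_simps)
  have rhs0: "0 \<le> real R * real (s1 + s2 + 1) * ln (18 * x) + real R * real s1 * ln A1 + real R * real s2 * ln A2"
    using x1 A1p A2p by (intro add_nonneg_nonneg mult_nonneg_nonneg) auto
  define N where "N = covering_number (sparse_lowrank R \<Gamma> s1 s2 :: (real ^ 'n2 ^ 'n1) set) \<epsilon>"
  have "ln (real N) \<le> real R * real (s1 + s2 + 1) * ln (18 * x) + real R * real s1 * ln A1 + real R * real s2 * ln A2"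
  proof (cases "N = 0")
    case True then show ?thesis using rhs0 by simp
  next
    case False
    have "real N \<le> real (card CC)" using covle unfolding N_def by simp
    also note cB
    finally have "ln (real N) \<le> ln ((18 * x) ^ R * (A1 ^ s1 * (18 * x) ^ s1) ^ R * (A2 ^ s2 * (18 * x) ^ s2) ^ R)"
      using False by (intro ln_mono) auto
    then show ?thesis using lnB by simp
  qed
  moreover have "18 * \<Gamma> * real R / \<epsilon> = 18 * x" by (simp add: x_def)
  ultimately show ?thesis unfolding N_def A1_def A2_def by simp
qed

end
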